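(* Let $N\ge1$, $D>0$ a fundamental discriminant with $D\equiv1\pmod{4N}$, $Q=[Na,b,c]\in\mathcal{Q}_{N,D,1}$, $d$ a positive divisor of $N$, and $Q^{(d)}:=[\frac{N}{d}a,b,cd]\in\mathcal{Q}_{N/d,D,1}$. Then the map $(u,v)\mapsto(u,dv)$ induces a bijection between $$\{(u,v)\in\mathbb{Z}^2/\Gamma_0^0(N/d,d)_{Q^{(d)}}:\ Q^{(d)}(u,v)>0,\ \gcd(v,N/d)=1\}$$ and $$\{(u,v)\in\mathbb{Z}^2/\Gamma_0(N)_Q:\ Q(u,v)>0,\ \gcd(v,N)=d\}.$$
   Context: $[a,b,c]=ax^2+bxy+cy^2$; $\mathcal{Q}_{M,D,1}:=\{[Ma,b,c]:a,b,c\in\mathbb{Z},\ b^2-4Mac=D,\ b\equiv1\pmod{2M}\}$. $\Gamma_0^0(N/d,d):=\{\begin{pmatrix}\alpha&\beta\\\gamma&\delta\end{pmatrix}\in\Gamma_0(N/d):\beta\equiv0\pmod d\}$. For a group $G$ of integer matrices of determinant $1$ and a form $P$, $G_P=\{M\in G:P\circ M=P\}$ with $(P\circ M)(x,y)=P(\alpha x+\beta y,\gamma x+\delta y)$, acting on column vectors $(u,v)^T\in\mathbb{Z}^2$ by left multiplication; $\mathbb{Z}^2/G_P$ denotes the orbit set. *)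

theory Defs
  imports "HOL-Computational_Algebra.Squarefree"
begin

type_synonym qform = "int \<times> int \<times> int"
text \<open>Integer 2x2 matrices (alpha, beta, gamma, delta) = [[alpha, beta],[gamma, delta]].\<close>
type_synonym mat2 = "int \<times> int \<times> int \<times> int"

definition qeval :: "qform \<Rightarrow> int \<Rightarrow> int \<Rightarrow> int" where
  "qeval P x y = (case P of (a, b, c) \<Rightarrow> a * x^2 + b * x * y + c * y^2)"

definition mat_vec :: "mat2 \<Rightarrow> int \<times> int \<Rightarrow> int \<times> int" where
  "mat_vec M w = (case M of (\<alpha>, \<beta>, \<gamma>, \<delta>) \<Rightarrow> case w of (u, v) \<Rightarrow>
      (\<alpha> * u + \<beta> * v, \<gamma> * u + \<delta> * v))"

definition mdet :: "mat2 \<Rightarrow> int" where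
  "mdet M = (case M of (\<alpha>, \<beta>, \<gamma>, \<delta>) \<Rightarrow> \<alpha> * \<delta> - \<beta> * \<gamma>)"

definition form_act :: "qform \<Rightarrow> mat2 \<Rightarrow> int \<Rightarrow> int \<Rightarrow> int" where
  "form_act P M x y = (case mat_vec M (x, y) of (x', y') \<Rightarrow> qeval P x' y')"

definition Gamma0 :: "int \<Rightarrow> mat2 set" where
  "Gamma0 N = {M. mdet M = 1 \<and> (case M of (\<alpha>, \<beta>, \<gamma>, \<delta>) \<Rightarrow> N dvd \<gamma>)}"

definition Gamma00 :: "int \<Rightarrow> int \<Rightarrow> mat2 set" where
  "Gamma00 M' d = {M \<in> Gamma0 M'. (case M of (\<alpha>, \<beta>, \<gamma>, \<delta>) \<Rightarrow> d dvd \<beta>)}"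

definition stab :: "mat2 set \<Rightarrow> qform \<Rightarrow> mat2 set" where
  "stab G P = {M \<in> G. form_act P M = qeval P}"

definition orbit :: "mat2 set \<Rightarrow> int \<times> int \<Rightarrow> (int \<times> int) set" where
  "orbit H w = (\<lambda>M. mat_vec M w) ` H"

definition fundamental_discriminant :: "int \<Rightarrow> bool" where
  "fundamental_discriminant D \<longleftrightarrow> D \<noteq> 1 \<and>
     ((D mod 4 = 1 \<and> squarefree D) \<or>
      (\<exists>m. D = 4 * m \<and> (m mod 4 = 2 \<or> m mod 4 = 3) \<and> squarefree m))"

definition QMD1 :: "int \<Rightarrow> int \<Rightarrow> qform set" where
  "QMD1 M D = {(M * a, b, c) | a b c. b^2 - 4 * M * a * c = D \<and> b mod (2 * M) = 1 mod (2 * M)}"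

end

theory Submission
  imports Defs
begin

definition mmul :: "mat2 \<Rightarrow> mat2 \<Rightarrow> mat2" where
  "mmul M M' = (case M of (a,b,c,d) \<Rightarrow> case M' of (a',b',c',d') \<Rightarrow>
     (a*a'+b*c', a*b'+b*d', c*a'+d*c', c*b'+d*d'))"

definition minv :: "mat2 \<Rightarrow> mat2" where
  "minv M = (case M of (a,b,c,d) \<Rightarrow> (d,-b,-c,a))"

lemma mv_mul: "mat_vec (mmul M M') w = mat_vec M (mat_vec M' w)"
  by (cases M; cases M'; cases w) (simp add: mmul_def mat_vec_def algebra_simps)

lemma mv_inv: assumes "mdet M = 1" shows "mat_vec (minv M) (mat_vec M w) = w"
proof -
  obtain a b c d where M: "M = (a,b,c,d)" by (cases M) auto
  obtain u v where w: "w = (u,v)" by (cases w) auto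
  have e: "a*d - b*c = 1" using assms M by (simp add: mdet_def)
  have "d*(a*u+b*v) - b*(c*u+d*v) = (a*d-b*c)*u" by (simp add: algebra_simps)
  moreover have "-c*(a*u+b*v) + a*(c*u+d*v) = (a*d-b*c)*v" by (simp add: algebra_simps)
  ultimately show ?thesis using e M w by (simp add: minv_def mat_vec_def)
qed

lemma mv_id: "mat_vec (1,0,0,1) w = w"
  by (cases w) (simp add: mat_vec_def)

lemma stab_iff: "form_act P M = qeval P \<longleftrightarrow>
   (\<forall>w. case_prod (qeval P) (mat_vec M w) = case_prod (qeval P) w)"
  by (auto simp: fun_eq_iff form_act_def split: prod.splits)

lemma H1_group:
  fixes k d :: int and P :: qform
  defines "H \<equiv> stab (Gamma00 k d) P"
  shows "(1,0,0,1) \<in> H"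
    and "M \<in> H \<Longrightarrow> M' \<in> H \<Longrightarrow> mmul M M' \<in> H"
    and "M \<in> H \<Longrightarrow> minv M \<in> H"
    and "M \<in> H \<Longrightarrow> mdet M = 1"
proof -
  show "(1,0,0,1) \<in> H" unfolding H_def stab_def Gamma00_def Gamma0_def
    by (simp add: stab_iff mv_id mdet_def)
next
  assume "M \<in> H" then show "mdet M = 1"
    unfolding H_def stab_def Gamma00_def Gamma0_def by auto
next
  assume A: "M \<in> H" "M' \<in> H"
  obtain a b c e where M: "M = (a,b,c,e)" by (cases M) auto
  obtain a' b' c' e' where M': "M' = (a',b',c',e')" by (cases M') auto
  have d1: "a*e-b*c = 1" "k dvd c" "d dvd b" using A(1) M
    unfolding H_def stab_def Gamma00_def Gamma0_def by (auto simp: mdet_def)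
  have d2: "a'*e'-b'*c' = 1" "k dvd c'" "d dvd b'" using A(2) M'
    unfolding H_def stab_def Gamma00_def Gamma0_def by (auto simp: mdet_def)
  have det: "(a*a'+b*c')*(c*b'+e*e') - (a*b'+b*e')*(c*a'+e*c') = (a*e-b*c)*(a'*e'-b'*c')"
    by (simp add: algebra_simps)
  have f1: "\<forall>w. case_prod (qeval P) (mat_vec M w) = case_prod (qeval P) w"
    using A(1) unfolding H_def stab_def by (simp add: stab_iff)
  have f2: "\<forall>w. case_prod (qeval P) (mat_vec M' w) = case_prod (qeval P) w"
    using A(2) unfolding H_def stab_def by (simp add: stab_iff)
  have f: "\<forall>w. case_prod (qeval P) (mat_vec (mmul M M') w) = case_prod (qeval P) w"
  proof
    fix w show "case_prod (qeval P) (mat_vec (mmul M M') w) = case_prod (qeval P) w"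
      using spec[OF f1, of "mat_vec M' w"] spec[OF f2, of w] by (simp only: mv_mul)
  qed
  have dvds: "k dvd c*a'+e*c'" "d dvd a*b'+b*e'" using d1 d2 by auto
  show "mmul M M' \<in> H" using f dvds det d1 d2 unfolding H_def stab_def Gamma00_def Gamma0_def stab_iff
    by (simp add: M M' mmul_def mdet_def)
next
  assume A: "M \<in> H"
  obtain a b c e where M: "M = (a,b,c,e)" by (cases M) auto
  have d1: "a*e-b*c = 1" "k dvd c" "d dvd b" using A M
    unfolding H_def stab_def Gamma00_def Gamma0_def by (auto simp: mdet_def)
  have f1: "\<forall>w. case_prod (qeval P) (mat_vec M w) = case_prod (qeval P) w"
    using A unfolding H_def stab_def by (simp add: stab_iff)
  have dm: "mdet M = 1" using d1 M by (simp add: mdet_def)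
  have f: "\<forall>w. case_prod (qeval P) (mat_vec (minv M) w) = case_prod (qeval P) w"
  proof
    fix w
    have "case_prod (qeval P) (mat_vec (minv M) w) = case_prod (qeval P) (mat_vec M (mat_vec (minv M) w))"
      using spec[OF f1, of "mat_vec (minv M) w"] by (simp only:)
    also have "mat_vec M (mat_vec (minv M) w) = w"
    proof -
      have "minv (minv M) = M" by (simp add: M minv_def)
      moreover have "mdet (minv M) = 1" using d1 by (simp add: M minv_def mdet_def algebra_simps)
      ultimately show ?thesis using mv_inv[of "minv M" w] by simp
    qed
    finally show "case_prod (qeval P) (mat_vec (minv M) w) = case_prod (qeval P) w" .
  qed
  show "minv M \<in> H" unfolding H_def stab_def Gamma00_def Gamma0_def
    using d1 f by (simp add: M minv_def mdet_def stab_iff algebra_simps)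
qed

lemma orbit_self:
  "x \<in> orbit (stab (Gamma00 k d) P) x"
  unfolding orbit_def using H1_group(1)[of k d P] mv_id[of x] by (metis image_eqI)

lemma orbit_trans:
  assumes "y \<in> orbit (stab (Gamma00 k d) P) x"
  shows "orbit (stab (Gamma00 k d) P) y = orbit (stab (Gamma00 k d) P) x"
proof -
  let ?H = "stab (Gamma00 k d) P"
  obtain M where M: "M \<in> ?H" "y = mat_vec M x" using assms unfolding orbit_def by auto
  show ?thesis
  proof
    show "orbit ?H y \<subseteq> orbit ?H x"
    proof
      fix z assume "z \<in> orbit ?H y"
      then obtain M' where "M' \<in> ?H" "z = mat_vec M' y" unfolding orbit_def by auto
      then have "z = mat_vec (mmul M' M) x" "mmul M' M \<in> ?H"
        using M H1_group(2) by (auto simp: mv_mul)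
      then show "z \<in> orbit ?H x" unfolding orbit_def by auto
    qed
  next
    show "orbit ?H x \<subseteq> orbit ?H y"
    proof
      fix z assume "z \<in> orbit ?H x"
      then obtain M' where M': "M' \<in> ?H" "z = mat_vec M' x" unfolding orbit_def by auto
      have "x = mat_vec (minv M) y" using M H1_group(4) mv_inv by metis
      then have "z = mat_vec (mmul M' (minv M)) y" "mmul M' (minv M) \<in> ?H"
        using M M' H1_group(2,3) by (auto simp: mv_mul)
      then show "z \<in> orbit ?H y" unfolding orbit_def by auto
    qed
  qed
qed

lemma fa_iff: "form_act (A,B,C) (p,q,r,s) = qeval (A,B,C) \<longleftrightarrow>
   (A*p^2+B*p*r+C*r^2 = A \<and> 2*A*p*q + B*(p*s+q*r) + 2*C*r*s = B \<and> A*q^2+B*q*s+C*s^2 = C)"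
proof
  assume h: "form_act (A,B,C) (p,q,r,s) = qeval (A,B,C)"
  have e1: "A*p^2+B*p*r+C*r^2 = A" using fun_cong[OF fun_cong[OF h, of 1], of 0]
    by (simp add: form_act_def mat_vec_def qeval_def)
  have e3: "A*q^2+B*q*s+C*s^2 = C" using fun_cong[OF fun_cong[OF h, of 0], of 1]
    by (simp add: form_act_def mat_vec_def qeval_def)
  have e2: "A*(p+q)^2+B*(p+q)*(r+s)+C*(r+s)^2 = A + B + C" using fun_cong[OF fun_cong[OF h, of 1], of 1]
    by (simp add: form_act_def mat_vec_def qeval_def)
  have "A*(p+q)^2+B*(p+q)*(r+s)+C*(r+s)^2 = (A*p^2+B*p*r+C*r^2) + (2*A*p*q + B*(p*s+q*r) + 2*C*r*s) + (A*q^2+B*q*s+C*s^2)"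
    by (simp add: power2_eq_square algebra_simps)
  then show "A*p^2+B*p*r+C*r^2 = A \<and> 2*A*p*q + B*(p*s+q*r) + 2*C*r*s = B \<and> A*q^2+B*q*s+C*s^2 = C"
    using e1 e2 e3 by linarith
next
  assume h: "A*p^2+B*p*r+C*r^2 = A \<and> 2*A*p*q + B*(p*s+q*r) + 2*C*r*s = B \<and> A*q^2+B*q*s+C*s^2 = C"
  show "form_act (A,B,C) (p,q,r,s) = qeval (A,B,C)"
  proof (intro ext)
    fix x y
    have "form_act (A,B,C) (p,q,r,s) x y = (A*p^2+B*p*r+C*r^2)*x^2 + (2*A*p*q + B*(p*s+q*r) + 2*C*r*s)*x*y + (A*q^2+B*q*s+C*s^2)*y^2"
      by (simp add: form_act_def mat_vec_def qeval_def power2_eq_square algebra_simps)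
    then show "form_act (A,B,C) (p,q,r,s) x y = qeval (A,B,C) x y" using h by (simp add: qeval_def)
  qed
qed

definition Tm :: "int \<Rightarrow> mat2 \<Rightarrow> mat2" where
  "Tm d M = (case M of (p,q,r,s) \<Rightarrow> (p, q div d, d*r, s))"

lemma T_in:
  fixes d k a b c :: int
  assumes d: "d > 0" and M: "M \<in> stab (Gamma00 k d) (k*a, b, c*d)"
  shows "Tm d M \<in> stab (Gamma0 (d*k)) (d*k*a, b, c)"
proof -
  obtain p q r s where Me: "M = (p,q,r,s)" by (cases M) auto
  have h: "p*s-q*r = 1" "k dvd r" "d dvd q"
    and f: "form_act (k*a, b, c*d) (p,q,r,s) = qeval (k*a, b, c*d)"
    using M Me unfolding stab_def Gamma00_def Gamma0_def by (auto simp: mdet_def)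
  obtain q' where q: "q = d*q'" using h(3) by auto
  have qd: "q div d = q'" using q d by simp
  have c: "k*a*p^2+b*p*r+c*d*r^2 = k*a" "2*(k*a)*p*(d*q') + b*(p*s+d*q'*r) + 2*(c*d)*r*s = b"
      "k*a*(d*q')^2+b*(d*q')*s+c*d*s^2 = c*d"
    using f unfolding fa_iff q by (simp_all add: algebra_simps)
  have c1: "d*k*a*p^2+b*p*(d*r)+c*(d*r)^2 = d*k*a"
  proof -
    have "d*k*a*p^2+b*p*(d*r)+c*(d*r)^2 = d*(k*a*p^2+b*p*r+c*d*r^2)" by (simp add: power2_eq_square algebra_simps)
    then show ?thesis using c(1) by simp
  qed
  have c2: "2*(d*k*a)*p*q' + b*(p*s+q'*(d*r)) + 2*c*(d*r)*s = b"
    using c(2) by (simp add: algebra_simps)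
  have c3: "d*k*a*q'^2+b*q'*s+c*s^2 = c"
  proof -
    have "d*(d*k*a*q'^2+b*q'*s+c*s^2) = k*a*(d*q')^2+b*(d*q')*s+c*d*s^2" by (simp add: power2_eq_square algebra_simps)
    then have "d*(d*k*a*q'^2+b*q'*s+c*s^2) = d*c" using c(3) by simp
    then show ?thesis using d by simp
  qed
  have "p*s - q'*(d*r) = 1" using h(1) q by (simp add: algebra_simps)
  moreover have "d*k dvd d*r" using h(2) by simp
  ultimately show ?thesis using c1 c2 c3 unfolding stab_def Gamma0_def
    by (simp add: Me Tm_def qd mdet_def fa_iff)
qed

lemma T_surj:
  fixes d k a b c :: int
  assumes d: "d > 0" and M: "M \<in> stab (Gamma0 (d*k)) (d*k*a, b, c)"
  shows "\<exists>M'\<in>stab (Gamma00 k d) (k*a, b, c*d). M = Tm d M'"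
proof -
  obtain p q r s where Me: "M = (p,q,r,s)" by (cases M) auto
  have h: "p*s-q*r = 1" "d*k dvd r"
    and f: "form_act (d*k*a, b, c) (p,q,r,s) = qeval (d*k*a, b, c)"
    using M Me unfolding stab_def Gamma0_def by (auto simp: mdet_def)
  obtain r' where r: "r = d*r'" using h(2) by (metis dvd_mult_left dvd_def)
  have kr: "k dvd r'" using h(2) r d by simp
  have c: "d*k*a*p^2+b*p*(d*r')+c*(d*r')^2 = d*k*a" "2*(d*k*a)*p*q + b*(p*s+q*(d*r')) + 2*c*(d*r')*s = b"
      "d*k*a*q^2+b*q*s+c*s^2 = c"
    using f unfolding fa_iff r by (simp_all add: algebra_simps)
  have c1: "k*a*p^2+b*p*r'+c*d*r'^2 = k*a"
  proof -
    have "d*(k*a*p^2+b*p*r'+c*d*r'^2) = d*k*a*p^2+b*p*(d*r')+c*(d*r')^2" by (simp add: power2_eq_square algebra_simps)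
    then have "d*(k*a*p^2+b*p*r'+c*d*r'^2) = d*(k*a)" using c(1) by simp
    then show ?thesis using d by simp
  qed
  have c2: "2*(k*a)*p*(d*q) + b*(p*s+(d*q)*r') + 2*(c*d)*r'*s = b"
    using c(2) by (simp add: algebra_simps)
  have c3: "k*a*(d*q)^2+b*(d*q)*s+c*d*s^2 = c*d"
  proof -
    have "k*a*(d*q)^2+b*(d*q)*s+c*d*s^2 = d*(d*k*a*q^2+b*q*s+c*s^2)" by (simp add: power2_eq_square algebra_simps)
    then show ?thesis using c(3) by simp
  qed
  have det: "p*s - (d*q)*r' = 1" using h(1) r by (simp add: algebra_simps)
  have "(p, d*q, r', s) \<in> stab (Gamma00 k d) (k*a, b, c*d)"
    unfolding stab_def Gamma00_def Gamma0_def using det kr c1 c2 c3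
    by (simp add: mdet_def fa_iff)
  moreover have "M = Tm d (p, d*q, r', s)" using d by (simp add: Me Tm_def r)
  ultimately show ?thesis by blast
qed

lemma T_act:
  fixes d :: int
  assumes d: "d > 0" and M: "M \<in> Gamma00 k d"
  shows "mat_vec (Tm d M) (u, d*v) = (fst (mat_vec M (u,v)), d * snd (mat_vec M (u,v)))"
proof -
  obtain p q r s where Me: "M = (p,q,r,s)" by (cases M) auto
  have "d dvd q" using M Me unfolding Gamma00_def by auto
  then obtain q' where q: "q = d*q'" by auto
  show ?thesis using d by (simp add: Me q Tm_def mat_vec_def algebra_simps)
qed

lemma orbit_conj:
  fixes d k a b c :: int
  assumes d: "d > 0"
  shows "orbit (stab (Gamma0 (d*k)) (d*k*a, b, c)) (u, d*v)
     = (\<lambda>(u::int, v::int). (u, d * v)) ` orbit (stab (Gamma00 k d) (k*a, b, c*d)) (u, v)"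
proof -
  let ?H1 = "stab (Gamma00 k d) (k*a, b, c*d)"
  let ?H2 = "stab (Gamma0 (d*k)) (d*k*a, b, c)"
  have H: "?H2 = Tm d ` ?H1" using T_in[OF d] T_surj[OF d] by blast
  have "orbit ?H2 (u, d*v) = (\<lambda>M. mat_vec M (u, d*v)) ` Tm d ` ?H1" unfolding orbit_def H ..
  also have "\<dots> = (\<lambda>M. mat_vec (Tm d M) (u, d*v)) ` ?H1" by (simp add: image_image)
  also have "\<dots> = (\<lambda>M. (\<lambda>(u::int, v::int). (u, d * v)) (mat_vec M (u, v))) ` ?H1"
  proof (rule image_cong[OF refl])
    fix M assume "M \<in> ?H1"
    then have "M \<in> Gamma00 k d" unfolding stab_def by auto
    then show "mat_vec (Tm d M) (u, d*v) = (\<lambda>(u::int, v::int). (u, d * v)) (mat_vec M (u, v))"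
      using T_act[OF d] by (simp add: case_prod_beta)
  qed
  also have "\<dots> = (\<lambda>(u::int, v::int). (u, d * v)) ` orbit ?H1 (u, v)"
    unfolding orbit_def by (simp add: image_image)
  finally show ?thesis .
qed

lemma abstract_bij:
  fixes \<phi> :: "int \<times> int \<Rightarrow> int \<times> int"
  assumes inj: "inj \<phi>"
    and orb: "\<And>w. orbit H2 (\<phi> w) = \<phi> ` orbit H1 w"
    and A: "A2 = \<phi> ` A1"
    and self: "\<And>x. x \<in> orbit H1 x"
    and tr: "\<And>x y. y \<in> orbit H1 x \<Longrightarrow> orbit H1 y = orbit H1 x"
  shows "(\<forall>x\<in>A1. \<forall>y\<in>A1. orbit H1 x = orbit H1 y \<longrightarrow> orbit H2 (\<phi> x) = orbit H2 (\<phi> y))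
            \<and> bij_betw (\<lambda>Orb. orbit H2 (\<phi> (SOME x. x \<in> Orb)))
                (orbit H1 ` A1) (orbit H2 ` A2)"
proof -
  have f2: "orbit H1 (SOME y. y \<in> orbit H1 x) = orbit H1 x" for x
  proof -
    have "(SOME y. y \<in> orbit H1 x) \<in> orbit H1 x" using self by (rule someI)
    then show ?thesis using tr by metis
  qed
  have f: "orbit H2 (\<phi> (SOME y. y \<in> orbit H1 x)) = \<phi> ` orbit H1 x" for x
    using f2 orb by metis
  have inj2: "inj_on (\<lambda>Orb. orbit H2 (\<phi> (SOME x. x \<in> Orb))) (orbit H1 ` A1)"
  proof (rule inj_onI)
    fix O1 O2 assume "O1 \<in> orbit H1 ` A1" "O2 \<in> orbit H1 ` A1"
      "orbit H2 (\<phi> (SOME x. x \<in> O1)) = orbit H2 (\<phi> (SOME x. x \<in> O2))"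
    then obtain x1 x2 where "O1 = orbit H1 x1" "O2 = orbit H1 x2"
      "\<phi> ` orbit H1 x1 = \<phi> ` orbit H1 x2" using f by auto
    then show "O1 = O2" using inj by (simp add: inj_image_eq_iff)
  qed
  have im: "(\<lambda>Orb. orbit H2 (\<phi> (SOME x. x \<in> Orb))) ` (orbit H1 ` A1) = orbit H2 ` A2"
    unfolding A image_image orb f2 ..
  show ?thesis using inj2 im orb unfolding bij_betw_def by auto
qed

theorem lemma6p3:
  fixes N D a b c d :: int
  assumes "N \<ge> 1" and "D > 0" and "fundamental_discriminant D"
    and "D mod (4 * N) = 1 mod (4 * N)"
    and "(N * a, b, c) \<in> QMD1 N D"
    and "d > 0" and "d dvd N"
  shows "let Q = (N * a, b, c); Qd = ((N div d) * a, b, c * d);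
             H1 = stab (Gamma00 (N div d) d) Qd; H2 = stab (Gamma0 N) Q;
             A1 = {(u, v). qeval Qd u v > 0 \<and> gcd v (N div d) = 1};
             A2 = {(u, v). qeval Q u v > 0 \<and> gcd v N = d};
             \<phi> = (\<lambda>(u::int, v::int). (u, d * v))
         in (\<forall>x\<in>A1. \<forall>y\<in>A1. orbit H1 x = orbit H1 y \<longrightarrow> orbit H2 (\<phi> x) = orbit H2 (\<phi> y))
            \<and> bij_betw (\<lambda>Orb. orbit H2 (\<phi> (SOME x. x \<in> Orb)))
                (orbit H1 ` A1) (orbit H2 ` A2)"
proof -
  have d: "d > 0" by fact
  obtain k where N: "N = d*k" using assms(7) by auto
  have kd: "N div d = k" using N d by simp
  let ?\<phi> = "\<lambda>(u::int, v::int). (u, d * v)"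
  have inj: "inj ?\<phi>" using d by (auto simp: inj_def)
  have qe: "qeval (d*k*a, b, c) u (d*v) = d * qeval (k*a, b, c*d) u v" for u v
    by (simp add: qeval_def power2_eq_square algebra_simps)
  have A: "{(u, v). qeval (d*k*a, b, c) u v > 0 \<and> gcd v (d*k) = d}
      = ?\<phi> ` {(u, v). qeval (k*a, b, c*d) u v > 0 \<and> gcd v k = 1}"
  proof
    show "?\<phi> ` {(u, v). qeval (k*a, b, c*d) u v > 0 \<and> gcd v k = 1}
        \<subseteq> {(u, v). qeval (d*k*a, b, c) u v > 0 \<and> gcd v (d*k) = d}"
    proof (rule subsetI)
      fix z assume "z \<in> ?\<phi> ` {(u, v). qeval (k*a, b, c*d) u v > 0 \<and> gcd v k = 1}"
      then obtain w where w: "z = ?\<phi> w" "w \<in> {(u, v). qeval (k*a, b, c*d) u v > 0 \<and> gcd v k = 1}"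
        by (rule imageE)
      obtain u v where uv: "w = (u, v)" by (cases w) auto
      have z: "z = (u, d*v)" using w(1) uv by simp
      have h: "0 < qeval (k*a, b, c*d) u v" "gcd v k = 1" using w(2) uv by simp_all
      have "gcd (d*v) (d*k) = \<bar>d\<bar> * gcd v k" by (rule gcd_mult_distrib_int[symmetric])
      then have "gcd (d*v) (d*k) = d" using h d by simp
      then show "z \<in> {(u, v). qeval (d*k*a, b, c) u v > 0 \<and> gcd v (d*k) = d}"
        using qe h d z by simp
    qed
  next
    show "{(u, v). qeval (d*k*a, b, c) u v > 0 \<and> gcd v (d*k) = d}
        \<subseteq> ?\<phi> ` {(u, v). qeval (k*a, b, c*d) u v > 0 \<and> gcd v k = 1}"
    proof (rule subsetI)
      fix z assume "z \<in> {(u, v). qeval (d*k*a, b, c) u v > 0 \<and> gcd v (d*k) = d}"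
      obtain u v where z: "z = (u, v)" by (cases z) auto
      have h: "0 < qeval (d*k*a, b, c) u v" "gcd v (d*k) = d" using \<open>z \<in> _\<close> z by simp_all
      have "d dvd v" using gcd_dvd1[of v "d*k"] h(2) by (simp only:)
      then obtain v' where v: "v = d*v'" by auto
      have "gcd (d*v') (d*k) = \<bar>d\<bar> * gcd v' k" by (rule gcd_mult_distrib_int[symmetric])
      then have "d * gcd v' k = d * 1" using h d v by simp
      then have g: "gcd v' k = 1" using d by (metis mult_left_cancel less_irrefl)
      have "0 < qeval (k*a, b, c*d) u v'" using h(1) qe[of u v'] v d
        by (simp add: zero_less_mult_iff)
      then show "z \<in> ?\<phi> ` {(u, v). qeval (k*a, b, c*d) u v > 0 \<and> gcd v k = 1}"
        using g v z by (auto intro!: image_eqI[of _ _ "(u, v')"])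
    qed
  qed
  have orb: "orbit (stab (Gamma0 (d*k)) (d*k*a, b, c)) (?\<phi> w)
      = ?\<phi> ` orbit (stab (Gamma00 k d) (k*a, b, c*d)) w" for w
    using orbit_conj[OF d, of k a b c "fst w" "snd w"] by (cases w) simp
  show ?thesis unfolding Let_def kd unfolding N
    by (rule abstract_bij[OF inj orb A orbit_self orbit_trans])
qed

end
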